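(* Let $0\le m\le n$. Every adjacency-preserving (resp. adjacency-preserving one-to-one) map $f:[m]\to[n]$ factors uniquely as a composite $[m]\xrightarrow{\psi}[m]\xrightarrow{\phi}[n]$ with $\phi\in\square$ and $\psi$ adjacency-preserving (resp. adjacency-preserving one-to-one).
   Context: $[0]=\{()\}$, $[n]=\{0,1\}^n$ ($n\ge1$) with the product order. Face maps $\delta_i^\alpha:[n-1]\to[n]$ insert $\alpha\in\{0,1\}$ at position $i$; $\square$ is the category with objects $[n]$, $n\ge0$, generated by the face maps (under composition of set maps). With $d(\epsilon,\epsilon')=\sum_i|\epsilon_i-\epsilon'_i|$, a map $f:[m]\to[n]$ is adjacency-preserving if it is strictly increasing and $d(x,y)=1$ implies $d(f(x),f(y))=1$. *)

theory Defs
  imports Main "HOL-Library.FuncSet"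
begin

text \<open>The cube [n] = {0,1}^n, elements are boolean lists of length n
  (False = 0, True = 1). [0] = {[]} is a one-point set.\<close>
definition cube :: "nat \<Rightarrow> bool list set" where
  "cube n = {x. length x = n}"

definition cube_le :: "bool list \<Rightarrow> bool list \<Rightarrow> bool" where
  "cube_le x y = list_all2 (\<le>) x y"

definition cube_lt :: "bool list \<Rightarrow> bool list \<Rightarrow> bool" where
  "cube_lt x y = (cube_le x y \<and> x \<noteq> y)"

definition cube_dist :: "bool list \<Rightarrow> bool list \<Rightarrow> nat" where
  "cube_dist x y = card {i. i < length x \<and> x ! i \<noteq> y ! i}"

text \<open>Maps [m] -> [n] are extensional functions in the PiE set from cube m to cube n.
  Adjacency-preserving: strictly increasing and d(x,y)=1 implies d(f x,f y)=1.\<close>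
definition adj_pres :: "nat \<Rightarrow> (bool list \<Rightarrow> bool list) \<Rightarrow> bool" where
  "adj_pres m f =
     ((\<forall>x\<in>cube m. \<forall>y\<in>cube m. cube_lt x y \<longrightarrow> cube_lt (f x) (f y)) \<and>
      (\<forall>x\<in>cube m. \<forall>y\<in>cube m. cube_dist x y = 1 \<longrightarrow> cube_dist (f x) (f y) = 1))"

text \<open>Face map delta_i^alpha : [n] -> [n+1] inserting alpha at (0-based) position i, i \<le> n.\<close>
definition face :: "nat \<Rightarrow> nat \<Rightarrow> bool \<Rightarrow> bool list \<Rightarrow> bool list" where
  "face n i a = restrict (\<lambda>x. take i x @ a # drop i x) (cube n)"

inductive box_mor_p :: "nat \<Rightarrow> nat \<Rightarrow> (bool list \<Rightarrow> bool list) \<Rightarrow> bool" for m where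
  box_id: "box_mor_p m m (restrict id (cube m))"
| box_face: "\<lbrakk>box_mor_p m n \<phi>; i \<le> n\<rbrakk> \<Longrightarrow> box_mor_p m (Suc n) (compose (cube m) (face n i a) \<phi>)"

definition box_mor :: "nat \<Rightarrow> nat \<Rightarrow> (bool list \<Rightarrow> bool list) set" where
  "box_mor m n = {\<phi>. box_mor_p m n \<phi>}"

end

theory Submission
  imports Defs
begin

fun fill :: "bool option list \<Rightarrow> bool list \<Rightarrow> bool list" where
  "fill [] xs = []"
| "fill (Some b # p) xs = b # fill p xs"
| "fill (None # p) [] = []"
| "fill (None # p) (x # xs) = x # fill p xs"

fun nones :: "bool option list \<Rightarrow> nat" where
  "nones [] = 0"
| "nones (None # p) = Suc (nones p)"
| "nones (Some b # p) = nones p"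

fun unfill :: "bool option list \<Rightarrow> bool list \<Rightarrow> bool list" where
  "unfill [] ys = []"
| "unfill (None # p) (y # ys) = y # unfill p ys"
| "unfill (Some b # p) (y # ys) = unfill p ys"
| "unfill (_ # p) [] = []"

definition hdist :: "bool list \<Rightarrow> bool list \<Rightarrow> nat" where
  "hdist x y = length (filter (\<lambda>(a,b). a \<noteq> b) (zip x y))"

lemma nones_filter: "nones p = length (filter (\<lambda>r. r = None) p)"
  by (induction p rule: nones.induct) auto

lemma nones_card: "nones p = card {i. i < length p \<and> p ! i = None}"
  by (simp add: nones_filter length_filter_conv_card)

lemma nones_append[simp]: "nones (p @ q) = nones p + nones q"
  by (induction p rule: nones.induct) auto

lemma nones_take_drop: "nones q = nones (take i q) + nones (drop i q)"
  by (metis append_take_drop_id nones_append)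

lemma nones_le: "nones p \<le> length p"
  by (induction p rule: nones.induct) auto

lemma nones_all: "nones p = length p \<Longrightarrow> p = replicate (length p) None"
  using nones_le by (induction p rule: nones.induct) (auto, metis Suc_n_not_le_n nones_le)

lemma fill_length: "length x = nones p \<Longrightarrow> length (fill p x) = length p"
  by (induction p x rule: fill.induct) auto

lemma fill_append: "length x = nones (p1 @ p2) \<Longrightarrow>
   fill (p1 @ p2) x = fill p1 (take (nones p1) x) @ fill p2 (drop (nones p1) x)"
proof (induction p1 arbitrary: x)
  case Nil then show ?case by simp
next
  case (Cons r p1)
  then show ?case by (cases r; cases x) auto
qed

lemma face_fill:
  assumes "length x = nones q" "i \<le> length q"
  shows "take i (fill q x) @ a # drop i (fill q x) = fill (take i q @ Some a # drop i q) x"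
proof -
  let ?k = "nones (take i q)"
  have q: "q = take i q @ drop i q" by simp
  have lx: "length x = nones (take i q @ drop i q)" using assms(1) q by metis
  have e: "fill q x = fill (take i q) (take ?k x) @ fill (drop i q) (drop ?k x)"
    using fill_append[OF lx] q by metis
  have kle: "?k \<le> length x" using assms(1) nones_take_drop[of q i] by simp
  have l1: "length (fill (take i q) (take ?k x)) = i"
    using fill_length[of "take ?k x" "take i q"] kle assms(2) by simp
  have lx2: "length x = nones (take i q @ (Some a # drop i q))" using lx by (simp only: nones_append) simp
  show ?thesis
    unfolding fill_append[OF lx2] e using l1 by simp
qed

lemma fill_id: "fill (replicate (length x) None) x = x"
  by (induction x) auto

lemma fill_Some_nth: "i < length p \<Longrightarrow> p ! i = Some b \<Longrightarrow> length x = nones p \<Longrightarrow> fill p x ! i = b"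
proof (induction p x arbitrary: i rule: fill.induct)
  case (2 c p xs) then show ?case by (cases i) auto
next
  case (4 p y ys) then show ?case by (cases i) auto
qed auto

lemma fill_inj: "length u = nones p \<Longrightarrow> length v = nones p \<Longrightarrow> fill p u = fill p v \<Longrightarrow> u = v"
proof (induction p arbitrary: u v)
  case Nil then show ?case by simp
next
  case (Cons r p)
  show ?case
  proof (cases r)
    case None
    then show ?thesis using Cons by (cases u; cases v) auto
  next
    case (Some b)
    then show ?thesis using Cons by auto
  qed
qed

lemma fill_le: "length u = nones p \<Longrightarrow> length v = nones p \<Longrightarrow>
   list_all2 (\<le>) (fill p u) (fill p v) = list_all2 (\<le>) u v"
proof (induction p arbitrary: u v)
  case Nil then show ?case by simp
next
  case (Cons r p) then show ?case by (cases r; cases u; cases v) auto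
qed

lemma fill_hdist: "length u = nones p \<Longrightarrow> length v = nones p \<Longrightarrow>
   hdist (fill p u) (fill p v) = hdist u v"
proof (induction p arbitrary: u v)
  case Nil then show ?case by (simp add: hdist_def)
next
  case (Cons r p) then show ?case by (cases r; cases u; cases v) (auto simp: hdist_def)
qed

lemma unfill_fill: "list_all2 (\<lambda>r c. r = None \<or> r = Some c) p y \<Longrightarrow>
   length (unfill p y) = nones p \<and> fill p (unfill p y) = y"
proof (induction p arbitrary: y)
  case Nil then show ?case by simp
next
  case (Cons r p) then show ?case by (cases r; cases y) auto
qed

lemma cube_dist_hdist: "length x = length y \<Longrightarrow> cube_dist x y = hdist x y"
  unfolding cube_dist_def hdist_def length_filter_conv_card
  by (rule arg_cong[where f=card]) auto

lemma hdist_same: "hdist xs xs = 0"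
  by (induction xs) (auto simp: hdist_def)

lemma hdist_Cons: "hdist (a # x) (b # y) = (if a \<noteq> b then 1 else 0) + hdist x y"
  by (simp add: hdist_def)

lemma hdist_append: "length a = length c \<Longrightarrow> hdist (a @ b) (c @ d) = hdist a c + hdist b d"
  by (simp add: hdist_def)

definition trues :: "bool list \<Rightarrow> nat set" where
  "trues y = {i. i < length y \<and> y ! i}"

lemma le_trues:
  assumes "cube_le u v"
  shows "trues u \<subseteq> trues v \<and> cube_dist u v = card (trues v) - card (trues u)"
proof -
  have len: "length u = length v" using assms list_all2_lengthD unfolding cube_le_def by blast
  have nth: "\<And>i. i < length u \<Longrightarrow> u ! i \<le> v ! i" using assms list_all2_nthD unfolding cube_le_def by blast
  have sub: "trues u \<subseteq> trues v" using nth len unfolding trues_def le_bool_def by auto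
  have "{i. i < length u \<and> u ! i \<noteq> v ! i} = trues v - trues u"
    using nth len unfolding trues_def le_bool_def by auto
  then have "cube_dist u v = card (trues v - trues u)" unfolding cube_dist_def by simp
  also have "\<dots> = card (trues v) - card (trues u)"
    by (rule card_Diff_subset) (use sub in \<open>auto simp: trues_def finite_subset\<close>)
  finally show ?thesis using sub by simp
qed

lemma compose_face:
  assumes "length q = n" "nones q = m" "i \<le> n"
  shows "compose (cube m) (face n i a) (restrict (fill q) (cube m)) =
         restrict (fill (take i q @ Some a # drop i q)) (cube m)"
  unfolding compose_def
proof (rule restrict_ext)
  fix x assume x: "x \<in> cube m"
  then have lx: "length x = nones q" using assms by (simp add: cube_def)
  have "fill q x \<in> cube n" using fill_length[OF lx] assms by (simp add: cube_def)
  then show "face n i a (restrict (fill q) (cube m) x) = fill (take i q @ Some a # drop i q) x"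
    using x face_fill[OF lx, of i a] assms by (simp add: face_def)
qed

lemma box_sound: "box_mor_p m n \<phi> \<Longrightarrow> \<exists>p. length p = n \<and> nones p = m \<and> \<phi> = restrict (fill p) (cube m)"
proof (induction rule: box_mor_p.induct)
  case box_id
  show ?case
  proof (intro exI conjI)
    show "length (replicate m None) = m" by simp
    show "nones (replicate m (None::bool option)) = m" by (induction m) auto
    show "restrict id (cube m) = restrict (fill (replicate m None)) (cube m)"
      by (rule restrict_ext) (metis cube_def fill_id id_apply mem_Collect_eq)
  qed
next
  case (box_face n \<phi> i a)
  then obtain q where q: "length q = n" "nones q = m" "\<phi> = restrict (fill q) (cube m)" by blast
  show ?case
  proof (intro exI conjI)
    show "length (take i q @ Some a # drop i q) = Suc n" using q box_face by simp
    show "nones (take i q @ Some a # drop i q) = m" using q nones_take_drop[of q i] by simp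
    show "compose (cube m) (face n i a) \<phi> = restrict (fill (take i q @ Some a # drop i q)) (cube m)"
      using compose_face[OF q(1,2) box_face(2)] q(3) by simp
  qed
qed

lemma box_complete: "length p = n \<Longrightarrow> nones p = m \<Longrightarrow> box_mor_p m n (restrict (fill p) (cube m))"
proof (induction n arbitrary: p)
  case 0
  then have "p = []" by simp
  moreover have "restrict (fill []) (cube 0) = restrict id (cube 0)"
    by (rule restrict_ext) (simp add: cube_def)
  moreover have "m = 0" using 0 by simp
  ultimately show ?case using box_mor_p.box_id[of 0] by metis
next
  case (Suc n)
  show ?case
  proof (cases "m = Suc n")
    case True
    then have "p = replicate m None" using nones_all Suc by metis
    then have "restrict (fill p) (cube m) = restrict id (cube m)"
      by (intro restrict_ext) (metis cube_def fill_id id_apply mem_Collect_eq)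
    then show ?thesis using True box_mor_p.box_id[of m] by metis
  next
    case False
    have "\<exists>i < length p. p ! i \<noteq> None"
    proof (rule ccontr)
      assume "\<not> ?thesis"
      then have "{i. i < length p \<and> p ! i = None} = {..<length p}" by auto
      then have "nones p = length p" using nones_card by simp
      then show False using False Suc by simp
    qed
    then obtain i a where i: "i < length p" "p ! i = Some a" by blast
    define q where "q = take i p @ drop (Suc i) p"
    have dp: "drop i p = Some a # drop (Suc i) p" using i by (metis Cons_nth_drop_Suc)
    have lq: "length q = n" using Suc i by (simp add: q_def)
    have nq: "nones q = m" using Suc nones_take_drop[of p i] dp by (simp add: q_def)
    have IH: "box_mor_p m n (restrict (fill q) (cube m))" using Suc.IH[OF lq nq] .
    have il: "i \<le> n" using i Suc by simp
    have tq: "take i q = take i p" "drop i q = drop (Suc i) p" using i by (simp_all add: q_def)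
    have pe: "take i q @ Some a # drop i q = p" using tq dp by (metis append_take_drop_id)
    show ?thesis using box_mor_p.box_face[OF IH il, of a] compose_face[OF lq nq il, of a] pe by metis
  qed
qed

lemma cube_le_trans: "cube_le a b \<Longrightarrow> cube_le b c \<Longrightarrow> cube_le a c"
  unfolding cube_le_def using list_all2_trans[of "(\<le>)" "(\<le>)" "(\<le>)" a b c] by fastforce

lemma cube_le_refl: "cube_le a a"
  unfolding cube_le_def by (simp add: list_all2_refl)

lemma finite_trues: "finite (trues y)"
  unfolding trues_def by simp

lemma chain:
  assumes f: "f \<in> cube m \<rightarrow>\<^sub>E cube n" and ap: "adj_pres m f"
  shows "cube_le (f (replicate m False)) (f (replicate m True)) \<and>
         cube_dist (f (replicate m False)) (f (replicate m True)) = m"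
proof -
  define x where "x k = replicate k True @ replicate (m - k) False" for k
  have xc: "x k \<in> cube m" if "k \<le> m" for k using that by (simp add: x_def cube_def)
  have step: "cube_lt (x k) (x (Suc k)) \<and> cube_dist (x k) (x (Suc k)) = 1" if k: "k < m" for k
  proof -
    define r where "r = replicate (m - Suc k) False"
    have e1: "m - k = Suc (m - Suc k)" using k by simp
    have xk: "x k = replicate k True @ False # r" by (simp add: x_def r_def e1)
    have xs: "x (Suc k) = replicate k True @ True # r" by (simp add: x_def r_def replicate_app_Cons_same)
    have le: "cube_le (x k) (x (Suc k))" unfolding xk xs cube_le_def
      by (rule list_all2_appendI) (auto simp: list_all2_refl)
    have ne: "x k \<noteq> x (Suc k)" unfolding xk xs by simp
    have "cube_dist (x k) (x (Suc k)) = hdist (x k) (x (Suc k))"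
      by (rule cube_dist_hdist) (simp add: xk xs)
    also have "\<dots> = 1" unfolding xk xs by (simp add: hdist_append hdist_same hdist_Cons)
    finally show ?thesis using le ne by (simp add: cube_lt_def)
  qed
  have main: "cube_le (f (x 0)) (f (x k)) \<and> card (trues (f (x k))) = card (trues (f (x 0))) + k"
    if "k \<le> m" for k
    using that
  proof (induction k)
    case 0 then show ?case by (simp add: cube_le_refl)
  next
    case (Suc k)
    then have IH: "cube_le (f (x 0)) (f (x k))" "card (trues (f (x k))) = card (trues (f (x 0))) + k"
      by auto
    have km: "k < m" using Suc by simp
    have lt: "cube_lt (f (x k)) (f (x (Suc k)))" and d1: "cube_dist (f (x k)) (f (x (Suc k))) = 1"
      using ap step[OF km] xc[of k] xc[of "Suc k"] km unfolding adj_pres_def by auto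
    have le: "cube_le (f (x k)) (f (x (Suc k)))" using lt by (simp add: cube_lt_def)
    from le_trues[OF le] d1 have sub: "trues (f (x k)) \<subseteq> trues (f (x (Suc k)))"
      and c: "card (trues (f (x (Suc k)))) - card (trues (f (x k))) = 1" by auto
    have "card (trues (f (x k))) \<le> card (trues (f (x (Suc k))))"
      using sub by (simp add: card_mono finite_trues)
    then show ?case using IH c cube_le_trans[OF IH(1) le] by simp
  qed
  have x0: "x 0 = replicate m False" and xm: "x m = replicate m True" by (simp_all add: x_def)
  from main[of m] have le: "cube_le (f (x 0)) (f (x m))" and c: "card (trues (f (x m))) = card (trues (f (x 0))) + m" by auto
  show ?thesis using le_trues[OF le] le c unfolding x0 xm by simp
qed

theorem proposition7p14:
  fixes m n :: nat and f :: "bool list \<Rightarrow> bool list"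
  assumes "m \<le> n"
    and "f \<in> cube m \<rightarrow>\<^sub>E cube n"
    and "adj_pres m f"
  shows "(\<exists>!p. fst p \<in> box_mor m n \<and> snd p \<in> cube m \<rightarrow>\<^sub>E cube m \<and> adj_pres m (snd p)
               \<and> f = compose (cube m) (fst p) (snd p))
       \<and> (inj_on f (cube m) \<longrightarrow>
           (\<exists>!p. fst p \<in> box_mor m n \<and> snd p \<in> cube m \<rightarrow>\<^sub>E cube m \<and> adj_pres m (snd p)
                 \<and> inj_on (snd p) (cube m) \<and> f = compose (cube m) (fst p) (snd p)))"
proof -
  note f = assms(2) and ap = assms(3)
  define z where "z = replicate m False"
  define o1 where "o1 = replicate m True"
  define f0 where "f0 = f z"
  define f1 where "f1 = f o1"
  have zc: "z \<in> cube m" and oc: "o1 \<in> cube m" by (simp_all add: z_def o1_def cube_def)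
  have fc: "x \<in> cube m \<Longrightarrow> f x \<in> cube n" for x using f by auto
  have lf: "x \<in> cube m \<Longrightarrow> length (f x) = n" for x using fc by (simp add: cube_def)
  have l0: "length f0 = n" and l1: "length f1 = n" using lf zc oc by (simp_all add: f0_def f1_def)
  from chain[OF f ap] have le01: "cube_le f0 f1" and d01: "cube_dist f0 f1 = m"
    by (simp_all add: f0_def f1_def z_def o1_def)
  define P where "P = map (\<lambda>i. if f0 ! i = f1 ! i then Some (f0 ! i) else None) [0..<n]"
  have lP: "length P = n" by (simp add: P_def)
  have Pn: "P ! i = (if f0 ! i = f1 ! i then Some (f0 ! i) else None)" if "i < n" for i
    using that by (simp add: P_def)
  have DN: "{i. i < length P \<and> P ! i = None} = {i. i < length f0 \<and> f0 ! i \<noteq> f1 ! i}"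
    using l0 lP Pn by (auto split: if_split_asm)
  have nP: "nones P = m" using d01 DN by (simp add: nones_card cube_dist_def)
  have uniqP: "p = P" if lp: "length p = n" and np: "nones p = m" and psi: "\<psi> \<in> cube m \<rightarrow>\<^sub>E cube m"
    and fe: "\<And>x. x \<in> cube m \<Longrightarrow> f x = fill p (\<psi> x)" for p \<psi>
  proof -
    define u where "u = \<psi> z"
    define v where "v = \<psi> o1"
    have lu: "length u = nones p" and lv: "length v = nones p"
      using psi zc oc np by (auto simp: u_def v_def cube_def)
    have fu: "f0 = fill p u" and fv: "f1 = fill p v" using fe zc oc by (simp_all add: f0_def f1_def u_def v_def)
    define D where "D = {i. i < n \<and> f0 ! i \<noteq> f1 ! i}"
    define N where "N = {i. i < n \<and> p ! i = None}"
    have someval: "f0 ! i = b \<and> f1 ! i = b" if "i < n" "p ! i = Some b" for i b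
      using fill_Some_nth[of i p b u] fill_Some_nth[of i p b v] that lp lu lv fu fv by simp
    have DsN: "D \<subseteq> N"
    proof
      fix i assume "i \<in> D"
      then have i: "i < n" "f0 ! i \<noteq> f1 ! i" by (auto simp: D_def)
      show "i \<in> N"
      proof (cases "p ! i")
        case None then show ?thesis using i by (simp add: N_def)
      next
        case (Some b) then show ?thesis using someval[OF i(1)] i by auto
      qed
    qed
    have cD: "card D = m" using d01 l0 by (simp add: D_def cube_dist_def)
    have cN: "card N = m" using np lp by (simp add: N_def nones_card)
    have DeqN: "D = N" using card_subset_eq[of N D] DsN cD cN by (simp add: N_def)
    show "p = P"
    proof (rule nth_equalityI)
      show "length p = length P" using lp lP by simp
      fix i assume "i < length p"
      then have i: "i < n" using lp by simp
      show "p ! i = P ! i"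
      proof (cases "p ! i")
        case None
        then have "i \<in> D" using DeqN i by (simp add: N_def)
        then show ?thesis using None i by (simp add: Pn D_def)
      next
        case (Some b)
        then have "i \<notin> D" using DeqN i by (simp add: N_def)
        then show ?thesis using Some i someval[OF i Some] by (simp add: Pn D_def)
      qed
    qed
  qed
  have mono: "cube_le (f a) (f b)" if a: "a \<in> cube m" and b: "b \<in> cube m" and ab: "cube_le a b" for a b
  proof (cases "a = b")
    case True then show ?thesis by (simp add: cube_le_refl)
  next
    case False
    then have "cube_lt a b" using ab by (simp add: cube_lt_def)
    then have "cube_lt (f a) (f b)" using ap a b unfolding adj_pres_def by blast
    then show ?thesis by (simp add: cube_lt_def)
  qed
  have between: "cube_le f0 (f x) \<and> cube_le (f x) f1" if x: "x \<in> cube m" for x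
  proof -
    have lx: "length x = m" using x by (simp add: cube_def)
    have "cube_le z x" unfolding cube_le_def z_def using lx by (simp add: list_all2_conv_all_nth)
    then have a: "cube_le f0 (f x)" using mono[OF zc x] by (simp add: f0_def)
    have "cube_le x o1" unfolding cube_le_def o1_def using lx by (simp add: list_all2_conv_all_nth)
    then have b: "cube_le (f x) f1" using mono[OF x oc] by (simp add: f1_def)
    show ?thesis using a b by simp
  qed
  have compat: "list_all2 (\<lambda>r c. r = None \<or> r = Some c) P (f x)" if x: "x \<in> cube m" for x
  proof -
    have a: "f0 ! i \<le> f x ! i" "f x ! i \<le> f1 ! i" if "i < n" for i
      using between[OF x] that l0 lf[OF x] unfolding cube_le_def
      by (auto dest: list_all2_nthD)
    have "P ! i = None \<or> P ! i = Some (f x ! i)" if i: "i < n" for i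
    proof (cases "f0 ! i = f1 ! i")
      case True
      have "f x ! i \<le> f0 ! i" using a(2)[OF i] True by simp
      then have "f x ! i = f0 ! i" using a(1)[OF i] by (rule order_antisym)
      then show ?thesis using Pn[OF i] True by simp
    next
      case False
      then show ?thesis using Pn[OF i] by simp
    qed
    then show ?thesis unfolding list_all2_conv_all_nth
      using lP lf[OF x] by simp
  qed
  define \<phi> where "\<phi> = restrict (fill P) (cube m)"
  define \<psi> where "\<psi> = restrict (\<lambda>x. unfill P (f x)) (cube m)"
  have phibox: "\<phi> \<in> box_mor m n" using box_complete[OF lP nP] by (simp add: box_mor_def \<phi>_def)
  have psic: "\<psi> x \<in> cube m" and fillpsi: "fill P (\<psi> x) = f x" if "x \<in> cube m" for x
    using unfill_fill[OF compat[OF that]] that nP by (simp_all add: \<psi>_def cube_def)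
  have psiPiE: "\<psi> \<in> cube m \<rightarrow>\<^sub>E cube m" using psic by (simp add: \<psi>_def)
  have fcomp: "f = compose (cube m) \<phi> \<psi>"
  proof
    fix x show "f x = compose (cube m) \<phi> \<psi> x"
    proof (cases "x \<in> cube m")
      case True then show ?thesis using psic fillpsi by (simp add: compose_def \<phi>_def)
    next
      case False then show ?thesis using PiE_arb[OF f False] by (simp add: compose_def)
    qed
  qed
  have lpsi: "length (\<psi> x) = nones P" if "x \<in> cube m" for x using psic[OF that] nP by (simp add: cube_def)
  have psiap: "adj_pres m \<psi>"
    unfolding adj_pres_def
  proof (intro conjI ballI impI)
    fix x y assume x: "x \<in> cube m" and y: "y \<in> cube m"
    {
      assume "cube_lt x y"
      then have "cube_lt (f x) (f y)" using ap x y unfolding adj_pres_def by blast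
      then have lt: "cube_lt (fill P (\<psi> x)) (fill P (\<psi> y))"
        using fillpsi[OF x] fillpsi[OF y] by simp
      have le: "cube_le (\<psi> x) (\<psi> y)"
        using lt fill_le[OF lpsi[OF x] lpsi[OF y]] unfolding cube_lt_def cube_le_def by blast
      have ne: "\<psi> x \<noteq> \<psi> y" using lt unfolding cube_lt_def by auto
      show "cube_lt (\<psi> x) (\<psi> y)" using le ne unfolding cube_lt_def by blast
    }
    {
      assume "cube_dist x y = 1"
      then have d: "cube_dist (f x) (f y) = 1" using ap x y unfolding adj_pres_def by blast
      have "cube_dist (\<psi> x) (\<psi> y) = hdist (\<psi> x) (\<psi> y)"
        using lpsi[OF x] lpsi[OF y] by (simp add: cube_dist_hdist)
      also have "\<dots> = hdist (f x) (f y)"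
        using fill_hdist[OF lpsi[OF x] lpsi[OF y]] fillpsi[OF x] fillpsi[OF y] by simp
      also have "\<dots> = cube_dist (f x) (f y)" using lf[OF x] lf[OF y] by (simp add: cube_dist_hdist)
      finally show "cube_dist (\<psi> x) (\<psi> y) = 1" using d by simp
    }
  qed
  have uniq: "q = (\<phi>, \<psi>)" if q1: "fst q \<in> box_mor m n" and q2: "snd q \<in> cube m \<rightarrow>\<^sub>E cube m"
    and q3: "f = compose (cube m) (fst q) (snd q)" for q
  proof -
    obtain p where p: "length p = n" "nones p = m" "fst q = restrict (fill p) (cube m)"
      using box_sound[of m n "fst q"] q1 unfolding box_mor_def by blast
    have fe: "f x = fill p (snd q x)" if "x \<in> cube m" for x
      using q3 q2 that p(3) by (auto simp: compose_def)
    have pP: "p = P" using uniqP[OF p(1,2) q2 fe] by simp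
    have s: "snd q = \<psi>"
    proof
      fix x show "snd q x = \<psi> x"
      proof (cases "x \<in> cube m")
        case True
        have "length (snd q x) = nones P" using q2 True nP by (auto simp: cube_def)
        moreover have "fill P (snd q x) = fill P (\<psi> x)" using fe[OF True] fillpsi[OF True] pP by simp
        ultimately show ?thesis using fill_inj lpsi[OF True] by blast
      next
        case False then show ?thesis using PiE_arb[OF q2 False] by (simp add: \<psi>_def)
      qed
    qed
    have "fst q = \<phi>" using p(3) pP by (simp add: \<phi>_def)
    then show ?thesis using s by (simp add: prod_eq_iff)
  qed
  show ?thesis
  proof (intro conjI impI)
    show "\<exists>!p. fst p \<in> box_mor m n \<and> snd p \<in> cube m \<rightarrow>\<^sub>E cube m \<and> adj_pres m (snd p)
               \<and> f = compose (cube m) (fst p) (snd p)"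
      by (rule ex1I[of _ "(\<phi>, \<psi>)"]) (use phibox psiPiE psiap fcomp uniq in auto)
    assume inj: "inj_on f (cube m)"
    have psiinj: "inj_on \<psi> (cube m)"
    proof (rule inj_onI)
      fix x y assume x: "x \<in> cube m" and y: "y \<in> cube m" and e: "\<psi> x = \<psi> y"
      have "f x = f y" using fillpsi[OF x] fillpsi[OF y] e by simp
      then show "x = y" by (rule inj_onD[OF inj _ x y])
    qed
    show "\<exists>!p. fst p \<in> box_mor m n \<and> snd p \<in> cube m \<rightarrow>\<^sub>E cube m \<and> adj_pres m (snd p)
                 \<and> inj_on (snd p) (cube m) \<and> f = compose (cube m) (fst p) (snd p)"
      by (rule ex1I[of _ "(\<phi>, \<psi>)"]) (use phibox psiPiE psiap fcomp uniq psiinj in auto)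
  qed
qed

end
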